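(* There exist a Cantor space $(X,d)$ and a homeomorphism $f$ of $X$ such that: (1) $X=\overline{Per(f)}$; (2) $f$ is equicontinuous; (3) $f$ has the periodic shadowing property; (4) $f$ does not have the strict periodic shadowing property; (5) $f^3$ has the strict periodic shadowing property.
   Context: A Cantor space is a compact metric space without isolated points that is totally disconnected. $Per(f)$ is the set of periodic points. Equicontinuous: for every $\epsilon>0$ there is $\delta>0$ with $d(x,y)\le\delta\Rightarrow\sup_{i\in\mathbb{Z}}d(f^i(x),f^i(y))\le\epsilon$. A $\delta$-cycle of a map $F$ is $(x_i)_{i=0}^m$, $m\ge1$, with $d(F(x_i),x_{i+1})\le\delta$ for $0\le i<m$ and $x_0=x_m$. $F$ has the periodic shadowing property if for every $\epsilon>0$ there is $\delta>0$ such that for every $\delta$-cycle $(x_i)_{i=0}^m$ of $F$ there is $p\in Per(F)$ with $d(x_i,F^i(p))\le\epsilon$ for $0\le i\le m$; $F$ has the strict periodic shadowing property if the same holds with $p$ required to satisfy $F^m(p)=p$. *)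

theory Defs
  imports "HOL-Analysis.Analysis"
begin

definition cantor_space :: "'a set \<Rightarrow> ('a \<Rightarrow> 'a \<Rightarrow> real) \<Rightarrow> bool" where
  "cantor_space X d \<longleftrightarrow>
     Metric_space X d \<and> X \<noteq> {} \<and>
     compact_space (Metric_space.mtopology X d) \<and>
     (\<forall>x\<in>X. x \<in> (Metric_space.mtopology X d) derived_set_of X) \<and>
     (\<forall>S. S \<subseteq> X \<and> connectedin (Metric_space.mtopology X d) S
            \<longrightarrow> (\<forall>x\<in>S. \<forall>y\<in>S. x = y))"

definition zpow :: "'a set \<Rightarrow> ('a \<Rightarrow> 'a) \<Rightarrow> int \<Rightarrow> 'a \<Rightarrow> 'a" where
  "zpow X f i = (if 0 \<le> i then f ^^ nat i else (inv_into X f) ^^ nat (- i))"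

definition Per :: "'a set \<Rightarrow> ('a \<Rightarrow> 'a) \<Rightarrow> 'a set" where
  "Per X f = {x \<in> X. \<exists>n>0. (f ^^ n) x = x}"

definition equicontinuous_homeo :: "'a set \<Rightarrow> ('a \<Rightarrow> 'a \<Rightarrow> real) \<Rightarrow> ('a \<Rightarrow> 'a) \<Rightarrow> bool" where
  "equicontinuous_homeo X d f \<longleftrightarrow>
     (\<forall>e>0. \<exists>\<delta>>0. \<forall>x\<in>X. \<forall>y\<in>X. d x y \<le> \<delta> \<longrightarrow>
        (\<forall>i::int. d (zpow X f i x) (zpow X f i y) \<le> e))"

definition delta_cycle :: "'a set \<Rightarrow> ('a \<Rightarrow> 'a \<Rightarrow> real) \<Rightarrow> ('a \<Rightarrow> 'a) \<Rightarrow> real \<Rightarrow> (nat \<Rightarrow> 'a) \<Rightarrow> nat \<Rightarrow> bool" where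
  "delta_cycle X d F \<delta> x m \<longleftrightarrow>
     1 \<le> m \<and> (\<forall>i\<le>m. x i \<in> X) \<and> (\<forall>i<m. d (F (x i)) (x (Suc i)) \<le> \<delta>) \<and> x 0 = x m"

definition periodic_shadowing :: "'a set \<Rightarrow> ('a \<Rightarrow> 'a \<Rightarrow> real) \<Rightarrow> ('a \<Rightarrow> 'a) \<Rightarrow> bool" where
  "periodic_shadowing X d F \<longleftrightarrow>
     (\<forall>e>0. \<exists>\<delta>>0. \<forall>x m. delta_cycle X d F \<delta> x m \<longrightarrow>
        (\<exists>p\<in>Per X F. \<forall>i\<le>m. d (x i) ((F ^^ i) p) \<le> e))"

definition strict_periodic_shadowing :: "'a set \<Rightarrow> ('a \<Rightarrow> 'a \<Rightarrow> real) \<Rightarrow> ('a \<Rightarrow> 'a) \<Rightarrow> bool" where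
  "strict_periodic_shadowing X d F \<longleftrightarrow>
     (\<forall>e>0. \<exists>\<delta>>0. \<forall>x m. delta_cycle X d F \<delta> x m \<longrightarrow>
        (\<exists>p\<in>Per X F. (F ^^ m) p = p \<and> (\<forall>i\<le>m. d (x i) ((F ^^ i) p) \<le> e)))"

end

theory Submission
  imports Defs
begin


definition MM :: "nat \<Rightarrow> nat" where "MM n = 2 ^ Suc n"

definition vld :: "(nat \<Rightarrow> nat) \<Rightarrow> bool" where
  "vld c \<longleftrightarrow> (\<forall>n. c n < MM n + 3) \<and> (\<forall>n m. MM n \<le> c n \<longrightarrow> MM m \<le> c m \<longrightarrow> n = m)"

definition Gg :: "(nat \<Rightarrow> nat) \<Rightarrow> nat \<Rightarrow> (nat \<Rightarrow> nat) \<Rightarrow> nat \<Rightarrow> nat" where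
  "Gg a b c n = (if \<exists>k<n. MM k \<le> c k then c n
      else if MM n \<le> c n then MM n + (c n - MM n + b) mod 3 else (c n + a n) mod MM n)"

definition ag :: "nat \<Rightarrow> (nat \<Rightarrow> nat) \<Rightarrow> (nat \<Rightarrow> nat) \<Rightarrow> bool" where
  "ag N c c' \<longleftrightarrow> (\<forall>n<N. c n = c' n)"

lemma MM_pos[simp]: "0 < MM n" by (simp add: MM_def)
lemma MM_ge2: "2 \<le> MM n" by (simp add: MM_def)
lemma mod_MM1[simp]: "x mod MM n < MM n" for x :: nat
  by (rule mod_less_divisor) simp
lemma mod_MM2[simp]: "\<not> MM n \<le> x mod MM n" for x :: nat
  using mod_MM1[of x n] by linarith

lemma Gg_mark[simp]: "MM n \<le> Gg a b c n \<longleftrightarrow> MM n \<le> c n"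
proof -
  have "(c n + a n) mod MM n < MM n" by simp
  then show ?thesis unfolding Gg_def by auto
qed

lemma Gg_comp: "Gg a b (Gg a' b' c) = Gg (\<lambda>n. a' n + a n) (b' + b) c"
proof
  fix n
  have e: "(\<exists>k<n. MM k \<le> Gg a' b' c k) = (\<exists>k<n. MM k \<le> c k)" by simp
  show "Gg a b (Gg a' b' c) n = Gg (\<lambda>n. a' n + a n) (b' + b) c n"
    unfolding Gg_def[of a b] e
    by (auto simp: Gg_def mod_add_left_eq add.assoc)
qed

lemma Gg_fix:
  assumes "vld c"
    and "\<And>n. (\<forall>k<n. c k < MM k) \<Longrightarrow> c n < MM n \<Longrightarrow> MM n dvd a n"
    and "\<And>n. (\<forall>k<n. c k < MM k) \<Longrightarrow> MM n \<le> c n \<Longrightarrow> 3 dvd b"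
  shows "Gg a b c = c"
proof
  fix n
  show "Gg a b c n = c n"
  proof (cases "\<exists>k<n. MM k \<le> c k")
    case True then show ?thesis by (simp add: Gg_def)
  next
    case False
    hence h: "\<forall>k<n. c k < MM k" by auto
    show ?thesis
    proof (cases "MM n \<le> c n")
      case True
      have "c n < MM n + 3" using assms(1) by (simp add: vld_def)
      hence "c n - MM n < 3" by simp
      moreover have "3 dvd b" using assms(3)[OF h True] .
      then obtain t where t: "b = 3 * t" by auto
      have "c n + b - MM n = (c n - MM n) + 3 * t" using True t by simp
      hence "(c n + b - MM n) mod 3 = c n - MM n" using \<open>c n - MM n < 3\<close> by simp
      then show ?thesis using False True
        by (auto simp: Gg_def)
    next
      case F2: False
      have "MM n dvd a n" using assms(2)[OF h] F2 by simp
      then show ?thesis using False F2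
        by (auto simp: Gg_def mod_add_right_eq[symmetric])
    qed
  qed
qed

lemma Gg_vld: "vld c \<Longrightarrow> vld (Gg a b c)"
  unfolding vld_def
proof (intro conjI allI impI)
  fix n assume "(\<forall>n. c n < MM n + 3) \<and> (\<forall>n m. MM n \<le> c n \<longrightarrow> MM m \<le> c m \<longrightarrow> n = m)"
  moreover have "(c n + a n) mod MM n < MM n" by simp
  ultimately show "Gg a b c n < MM n + 3"
    by (auto simp: Gg_def less_imp_le_nat trans_less_add1)
next
  fix n m assume "(\<forall>n. c n < MM n + 3) \<and> (\<forall>n m. MM n \<le> c n \<longrightarrow> MM m \<le> c m \<longrightarrow> n = m)"
    "MM n \<le> Gg a b c n" "MM m \<le> Gg a b c m"
  then show "n = m" by simp
qed

lemma Gg_ag: "ag N c c' \<Longrightarrow> ag N (Gg a b c) (Gg a b c')"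
  unfolding ag_def Gg_def
proof (intro allI impI)
  fix n assume h: "\<forall>n<N. c n = c' n" "n < N"
  hence "(\<exists>k<n. MM k \<le> c k) = (\<exists>k<n. MM k \<le> c' k)" by auto
  have "c n = c' n" using h by auto
  thus "(if \<exists>k<n. MM k \<le> c k then c n
         else if MM n \<le> c n then MM n + (c n - MM n + b) mod 3 else (c n + a n) mod MM n) =
        (if \<exists>k<n. MM k \<le> c' k then c' n
         else if MM n \<le> c' n then MM n + (c' n - MM n + b) mod 3 else (c' n + a n) mod MM n)"
    using h \<open>(\<exists>k<n. MM k \<le> c k) = (\<exists>k<n. MM k \<le> c' k)\<close> by (simp only: \<open>c n = c' n\<close>)
qed

definition Fs where "Fs = Gg (\<lambda>_. 1) 1"
definition Hs where "Hs = Gg (\<lambda>n. MM n - 1) 2"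

lemma HF: "vld c \<Longrightarrow> Hs (Fs c) = c"
  unfolding Hs_def Fs_def Gg_comp
  by (rule Gg_fix) (auto simp: Suc_leI numeral_3_eq_3)

lemma FH: "vld c \<Longrightarrow> Fs (Hs c) = c"
  unfolding Hs_def Fs_def Gg_comp
  by (rule Gg_fix) (auto simp: Suc_leI numeral_3_eq_3)

lemma Fs_pow: "vld c \<Longrightarrow> (Fs ^^ i) c = Gg (\<lambda>_. i) i c"
proof (induction i)
  case 0
  show ?case using Gg_fix[OF "0.prems", of "\<lambda>_. 0" 0] by simp
next
  case (Suc i)
  then show ?case by (simp add: Fs_def Gg_comp)
qed

lemma ag_mono: "ag N c c' \<Longrightarrow> M \<le> N \<Longrightarrow> ag M c c'" by (auto simp: ag_def)
lemma ag_trans: "ag N a b \<Longrightarrow> ag N b c \<Longrightarrow> ag N a c" by (auto simp: ag_def)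
lemma ag_sym: "ag N a b \<Longrightarrow> ag N b a" by (auto simp: ag_def)



definition ud :: "(nat \<Rightarrow> nat) \<Rightarrow> (nat \<Rightarrow> nat) \<Rightarrow> real" where
  "ud c c' = (if c = c' then 0 else (1/2) ^ (LEAST n. \<not> ag (Suc n) c c'))"

lemma ag_all: "(\<forall>N. ag N c c') \<longleftrightarrow> c = c'"
  by (auto simp: ag_def)

lemma ud_le: "ud c c' \<le> (1/2)^N \<longleftrightarrow> ag N c c'"
proof (cases "c = c'")
  case True then show ?thesis by (simp add: ud_def ag_def)
next
  case False
  then obtain k0 where "c k0 \<noteq> c' k0" by (auto simp: fun_eq_iff)
  hence k: "\<not> ag (Suc k0) c c'" by (auto simp: ag_def)
  define L where "L = (LEAST n. \<not> ag (Suc n) c c')"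
  have L1: "\<not> ag (Suc L) c c'" unfolding L_def using k by (rule LeastI)
  have L2: "\<And>n. n < L \<Longrightarrow> ag (Suc n) c c'" unfolding L_def using not_less_Least by blast
  have "ud c c' = (1/2)^L" using False by (simp add: ud_def L_def)
  moreover have "N \<le> L \<longleftrightarrow> ag N c c'"
  proof
    assume "N \<le> L"
    show "ag N c c'"
    proof (cases N)
      case 0 then show ?thesis by (simp add: ag_def)
    next
      case (Suc m) then show ?thesis using L2 \<open>N \<le> L\<close> by simp
    qed
  next
    assume "ag N c c'"
    show "N \<le> L"
    proof (rule ccontr)
      assume "\<not> N \<le> L"
      hence "Suc L \<le> N" by simp
      thus False using ag_mono[OF \<open>ag N c c'\<close>] L1 by blast
    qed
  qed
  ultimately show ?thesis by simp
qed

lemma ud_cases: "ud c c' = 0 \<or> (\<exists>L. ud c c' = (1/2)^L)"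
proof (cases "c = c'")
  case True then show ?thesis by (simp add: ud_def)
next
  case False then show ?thesis unfolding ud_def
    by (intro disjI2 exI[of _ "LEAST n. \<not> ag (Suc n) c c'"]) simp
qed

lemma ud_lt: "ud c c' < (1/2)^N \<longleftrightarrow> ag (Suc N) c c'"
proof
  assume "ag (Suc N) c c'"
  hence "ud c c' \<le> (1/2)^Suc N" using ud_le by blast
  also have "\<dots> < (1/2)^N" by simp
  finally show "ud c c' < (1/2)^N" .
next
  assume a: "ud c c' < (1/2)^N"
  show "ag (Suc N) c c'"
  proof (cases "ud c c' = 0")
    case True
    then show ?thesis using ud_le[of c c' "Suc N"] by simp
  next
    case False
    then obtain L where L: "ud c c' = (1/2)^L" using ud_cases by blast
    hence "N < L" using a by simp
    hence "Suc N \<le> L" by simp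
    hence "(1/2::real)^L \<le> (1/2)^(Suc N)" by (rule power_decreasing) auto
    hence "ud c c' \<le> (1/2)^Suc N" using L by simp
    then show ?thesis using ud_le by blast
  qed
qed

lemma ud_eqI: "(\<And>N. ag N a b \<longleftrightarrow> ag N a' b') \<Longrightarrow> ud a b = ud a' b'"
proof -
  assume h: "\<And>N. ag N a b \<longleftrightarrow> ag N a' b'"
  have "(\<forall>N. ag N a b) = (\<forall>N. ag N a' b')" using h by simp
  hence "a = b \<longleftrightarrow> a' = b'" by (simp only: ag_all)
  moreover have "(\<lambda>n. \<not> ag (Suc n) a b) = (\<lambda>n. \<not> ag (Suc n) a' b')" using h by auto
  ultimately show ?thesis by (simp add: ud_def)
qed

lemma ud_nonneg[simp]: "0 \<le> ud c c'" by (simp add: ud_def)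

lemma ud_sym: "ud c c' = ud c' c"
  by (rule ud_eqI) (auto simp: ag_def)

lemma ud_zero[simp]: "ud c c' = 0 \<longleftrightarrow> c = c'"
  by (simp add: ud_def)

lemma ud_tri: "ud a c \<le> ud a b + ud b c"
proof (cases "a = c")
  case True
  have "ud a c = 0" using True by simp
  then show ?thesis using ud_nonneg[of a b] ud_nonneg[of b c] by linarith
next
  case False
  then obtain L where L: "ud a c = (1/2)^L" using ud_cases[of a c] by auto
  show ?thesis
  proof (rule ccontr)
    assume "\<not> ?thesis"
    hence "ud a b < (1/2)^L" "ud b c < (1/2)^L" using L ud_nonneg[of a b] ud_nonneg[of b c] by linarith+
    hence "ag (Suc L) a c" using ud_lt ag_trans by blast
    hence "ud a c < (1/2)^L" using ud_lt by blast
    thus False using L by simp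
  qed
qed

lemma small_pow: "0 < (e::real) \<Longrightarrow> \<exists>N. (1/2::real)^N < e"
  using real_arch_pow_inv[of e "1/2"] by simp



lemma ex_inj: "\<exists>e::(nat \<Rightarrow> nat) \<Rightarrow> real. inj e"
proof -
  define g where "g c = {prod_encode (n, c n) | n. True}" for c :: "nat \<Rightarrow> nat"
  have "inj g"
  proof (rule injI)
    fix c c' assume "g c = g c'"
    show "c = c'"
    proof
      fix n
      have "prod_encode (n, c n) \<in> g c" by (auto simp: g_def)
      hence "prod_encode (n, c n) \<in> g c'" using \<open>g c = g c'\<close> by simp
      then obtain m where "prod_encode (n, c n) = prod_encode (m, c' m)" unfolding g_def by blast
      thus "c n = c' n" using prod_encode_eq by auto
    qed
  qed
  obtain h :: "nat set \<Rightarrow> real" where "bij_betw h UNIV UNIV"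
    using nat_sets_eqpoll_reals unfolding eqpoll_def by blast
  hence "inj h" by (simp add: bij_betw_def)
  hence "inj (h \<circ> g)" using \<open>inj g\<close> by (simp add: inj_compose)
  thus ?thesis by blast
qed

definition enc :: "(nat \<Rightarrow> nat) \<Rightarrow> real" where "enc = (SOME e. inj e)"
lemma inj_enc: "inj enc" unfolding enc_def using ex_inj by (rule someI_ex)
definition co :: "real \<Rightarrow> nat \<Rightarrow> nat" where "co = inv enc"
lemma co_enc[simp]: "co (enc c) = c" unfolding co_def using inj_enc by simp

definition XX :: "real set" where "XX = enc ` {c. vld c}"
definition ff :: "real \<Rightarrow> real" where "ff x = enc (Fs (co x))"
definition gg :: "real \<Rightarrow> real" where "gg x = enc (Hs (co x))"
definition dd :: "real \<Rightarrow> real \<Rightarrow> real" where "dd x y = ud (co x) (co y)"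

lemma XX_enc[simp]: "enc c \<in> XX \<longleftrightarrow> vld c"
  unfolding XX_def using inj_enc by (auto dest: injD)

lemma XX_co: "x \<in> XX \<Longrightarrow> vld (co x)" "x \<in> XX \<Longrightarrow> enc (co x) = x"
  unfolding XX_def by auto

lemma co_inj: "x \<in> XX \<Longrightarrow> y \<in> XX \<Longrightarrow> co x = co y \<longleftrightarrow> x = y"
  using XX_co by metis

lemma ff_XX: "x \<in> XX \<Longrightarrow> ff x \<in> XX"
  unfolding ff_def Fs_def using XX_co Gg_vld by simp
lemma gg_XX: "x \<in> XX \<Longrightarrow> gg x \<in> XX"
  unfolding gg_def Hs_def using XX_co Gg_vld by simp
lemma ff_gg: "x \<in> XX \<Longrightarrow> ff (gg x) = x"
  unfolding ff_def gg_def using XX_co FH by simp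
lemma gg_ff: "x \<in> XX \<Longrightarrow> gg (ff x) = x"
  unfolding ff_def gg_def using XX_co HF by simp

lemma ff_pow: "x \<in> XX \<Longrightarrow> (ff ^^ i) x = enc (Gg (\<lambda>_. i) i (co x))"
proof -
  assume x: "x \<in> XX"
  have "(ff ^^ i) x = enc ((Fs ^^ i) (co x))"
  proof (induction i)
    case 0 then show ?case using XX_co[OF x] by simp
  next
    case (Suc i) then show ?case by (simp add: ff_def)
  qed
  then show ?thesis using Fs_pow XX_co[OF x] by simp
qed

interpretation M: Metric_space XX dd
proof
  fix x y z
  show "0 \<le> dd x y" by (simp add: dd_def)
  show "dd x y = dd y x" by (simp add: dd_def ud_sym)
  show "x \<in> XX \<Longrightarrow> y \<in> XX \<Longrightarrow> dd x y = 0 \<longleftrightarrow> x = y" by (simp add: dd_def co_inj)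
  show "dd x z \<le> dd x y + dd y z" by (simp add: dd_def ud_tri)
qed

lemma dd_le: "dd x y \<le> (1/2)^N \<longleftrightarrow> ag N (co x) (co y)"
  by (simp add: dd_def ud_le)

lemma ag_Fs: "vld c \<Longrightarrow> vld c' \<Longrightarrow> ag N (Fs c) (Fs c') \<longleftrightarrow> ag N c c'"
proof
  assume v: "vld c" "vld c'" and h: "ag N (Fs c) (Fs c')"
  have "ag N (Hs (Fs c)) (Hs (Fs c'))" unfolding Hs_def by (rule Gg_ag[OF h])
  thus "ag N c c'" using v by (simp add: HF)
next
  assume "ag N c c'" thus "ag N (Fs c) (Fs c')" unfolding Fs_def by (rule Gg_ag)
qed

lemma ag_Hs: "vld c \<Longrightarrow> vld c' \<Longrightarrow> ag N (Hs c) (Hs c') \<longleftrightarrow> ag N c c'"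
proof
  assume v: "vld c" "vld c'" and h: "ag N (Hs c) (Hs c')"
  have "ag N (Fs (Hs c)) (Fs (Hs c'))" unfolding Fs_def by (rule Gg_ag[OF h])
  thus "ag N c c'" using v by (simp add: FH)
next
  assume "ag N c c'" thus "ag N (Hs c) (Hs c')" unfolding Hs_def by (rule Gg_ag)
qed

lemma ff_iso: "x \<in> XX \<Longrightarrow> y \<in> XX \<Longrightarrow> dd (ff x) (ff y) = dd x y"
  unfolding dd_def ff_def using XX_co by (auto intro!: ud_eqI simp: ag_Fs)

lemma gg_iso: "x \<in> XX \<Longrightarrow> y \<in> XX \<Longrightarrow> dd (gg x) (gg y) = dd x y"
  unfolding dd_def gg_def using XX_co by (auto intro!: ud_eqI simp: ag_Hs)

lemma ff_inj: "inj_on ff XX"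
  by (metis gg_ff inj_onI)

lemma ff_surj: "ff ` XX = XX"
  using ff_XX ff_gg gg_XX by (metis image_subset_iff subsetI subset_antisym imageI)

lemma inv_ff: "y \<in> XX \<Longrightarrow> inv_into XX ff y = gg y"
  by (rule inv_into_f_eq[OF ff_inj gg_XX ff_gg]) auto

lemma iso_pow:
  assumes "\<And>x. x \<in> A \<Longrightarrow> g x \<in> A" "\<And>x y. x \<in> A \<Longrightarrow> y \<in> A \<Longrightarrow> D (g x) (g y) = D x y"
  shows "x \<in> A \<Longrightarrow> y \<in> A \<Longrightarrow> (g ^^ n) x \<in> A \<and> D ((g ^^ n) x) ((g ^^ n) y) = D x y"
proof -
  assume xy: "x \<in> A" "y \<in> A"
  have "(g ^^ n) x \<in> A \<and> (g ^^ n) y \<in> A \<and> D ((g ^^ n) x) ((g ^^ n) y) = D x y"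
    by (induction n) (auto simp: assms xy)
  thus ?thesis by simp
qed

lemma zpow_iso: "x \<in> XX \<Longrightarrow> y \<in> XX \<Longrightarrow> dd (zpow XX ff i x) (zpow XX ff i y) = dd x y"
proof -
  assume x: "x \<in> XX" and y: "y \<in> XX"
  have a: "\<And>x. x \<in> XX \<Longrightarrow> inv_into XX ff x \<in> XX" by (simp add: inv_ff gg_XX)
  have b: "\<And>x y. x \<in> XX \<Longrightarrow> y \<in> XX \<Longrightarrow> dd (inv_into XX ff x) (inv_into XX ff y) = dd x y"
    by (simp add: inv_ff gg_iso)
  show ?thesis unfolding zpow_def
    using iso_pow[of XX ff dd, OF ff_XX ff_iso x y] iso_pow[of XX "inv_into XX ff" dd, OF a b x y]
    by auto
qed

lemma P_equi: "equicontinuous_homeo XX dd ff"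
  unfolding equicontinuous_homeo_def using zpow_iso by (metis order_refl)

lemma P_homeo: "homeomorphic_map M.mtopology M.mtopology ff"
  unfolding homeomorphic_map_maps
proof (intro exI[of _ gg])
  have c1: "continuous_map M.mtopology M.mtopology ff"
    unfolding M.metric_continuous_map[OF M.Metric_space_axioms]
    using ff_XX ff_iso by auto
  have c2: "continuous_map M.mtopology M.mtopology gg"
    unfolding M.metric_continuous_map[OF M.Metric_space_axioms]
    using gg_XX gg_iso by auto
  show "homeomorphic_maps M.mtopology M.mtopology ff gg"
    unfolding homeomorphic_maps_def using c1 c2 ff_gg gg_ff by simp
qed



lemma MM_ne0[simp]: "MM n \<noteq> 0" using MM_pos[of n] by linarith

lemma mod_dvd_lemma: "(x::nat) < q \<Longrightarrow> (x + t) mod q = x \<Longrightarrow> q dvd t"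
proof -
  assume a: "x < q" "(x + t) mod q = x"
  hence "(x + t) mod q = x mod q" by simp
  hence "q dvd (x + t - x)" using mod_eq_dvd_iff_nat[of x "x + t" q] by simp
  thus ?thesis by simp
qed

lemma MM_dvd: "n \<le> j \<Longrightarrow> MM n dvd MM j"
  unfolding MM_def by (rule le_imp_power_dvd) simp

lemma marked_periodic:
  assumes v: "vld c" and j: "MM j \<le> c j" and d: "\<And>n. n < j \<Longrightarrow> MM n dvd a n" and b: "3 dvd b"
  shows "Gg a b c = c"
proof (rule Gg_fix[OF v])
  fix n assume h: "\<forall>k<n. c k < MM k" "c n < MM n"
  have "n < j"
  proof (rule ccontr)
    assume "\<not> n < j"
    hence "j < n \<or> j = n" by auto
    thus False using h j by fastforce
  qed
  thus "MM n dvd a n" by (rule d)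
next
  show "3 dvd b" by (rule b)
qed

lemma mkper:
  assumes v: "vld c"
  shows "\<exists>c'. vld c' \<and> ag N c c' \<and> (\<exists>j\<le>N. MM j \<le> c' j)"
proof (cases "\<exists>j<N. MM j \<le> c j")
  case True
  then show ?thesis using v by (auto simp: ag_def intro: less_imp_le)
next
  case False
  define c' where "c' n = (if n < N then c n else if n = N then MM N else 0)" for n
  have "vld c'" unfolding vld_def
  proof (intro conjI allI impI)
    fix n show "c' n < MM n + 3" using v by (auto simp: c'_def vld_def)
  next
    fix n m assume "MM n \<le> c' n" "MM m \<le> c' m"
    hence "n = N" "m = N" using False MM_pos[of n] MM_pos[of m] by (auto simp: c'_def split: if_splits)
    thus "n = m" by simp
  qed
  moreover have "ag N c c'" by (simp add: ag_def c'_def)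
  moreover have "MM N \<le> c' N" by (simp add: c'_def)
  ultimately show ?thesis by blast
qed

lemma per_of_marked:
  assumes "vld c" "MM j \<le> c j"
  shows "enc c \<in> Per XX ff"
proof -
  have "Gg (\<lambda>_. 3 * MM j) (3 * MM j) c = c"
    by (rule marked_periodic[OF assms]) (auto intro!: dvd_mult MM_dvd)
  hence "(ff ^^ (3 * MM j)) (enc c) = enc c" using ff_pow[of "enc c"] assms by simp
  moreover have "0 < 3 * MM j" by simp
  ultimately have "\<exists>n>0. (ff ^^ n) (enc c) = enc c" by blast
  then show ?thesis unfolding Per_def using assms by simp
qed

lemma P_dense: "M.mtopology closure_of (Per XX ff) = XX"
proof
  show "M.mtopology closure_of Per XX ff \<subseteq> XX" unfolding M.metric_closure_of by auto
next
  show "XX \<subseteq> M.mtopology closure_of Per XX ff" unfolding M.metric_closure_of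
  proof (safe)
    fix x r :: real assume x: "x \<in> XX" and r: "0 < r"
    obtain N where N: "(1/2::real)^N < r" using small_pow[OF r] by blast
    obtain c' where c': "vld c'" "ag N (co x) c'" "\<exists>j\<le>N. MM j \<le> c' j" using mkper[OF XX_co(1)[OF x]] by blast
    have "enc c' \<in> Per XX ff" using c' per_of_marked by blast
    moreover have "dd x (enc c') < r" using c'(2) N dd_le[of x "enc c'" N] by simp
    moreover have "enc c' \<in> XX" using c'(1) by simp
    ultimately show "\<exists>y\<in>Per XX ff. y \<in> M.mball x r" using x
      by (intro bexI[of _ "enc c'"]) auto
  qed
qed


lemma XX_ne: "XX \<noteq> {}"
proof -
  have "vld (\<lambda>_. 0)" by (simp add: vld_def)
  thus ?thesis using XX_enc by blast
qed

lemma P_perfect: "x \<in> XX \<Longrightarrow> x \<in> M.mtopology derived_set_of XX"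
  unfolding M.metric_derived_set_of
proof (safe)
  fix r :: real assume x: "x \<in> XX" and r: "0 < r"
  obtain N where N: "(1/2::real)^N < r" using small_pow[OF r] by blast
  define c where "c = co x"
  have v: "vld c" using XX_co x c_def by simp
  define p where "p = (if MM N \<le> c N then Suc N else N)"
  have pN: "N \<le> p" by (simp add: p_def)
  have pn: "c p < MM p"
  proof (cases "MM N \<le> c N")
    case True
    have "\<not> MM (Suc N) \<le> c (Suc N)"
    proof
      assume "MM (Suc N) \<le> c (Suc N)"
      with v True have "Suc N = N" unfolding vld_def by blast
      thus False by simp
    qed
    then show ?thesis using True by (simp add: p_def)
  next
    case False then show ?thesis by (simp add: p_def)
  qed
  define c' where "c' = c(p := (if c p = 0 then 1 else 0))"
  have "c' p < MM p" using MM_ge2[of p] by (simp add: c'_def)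
  have v': "vld c'" unfolding vld_def
  proof (intro conjI allI impI)
    fix n show "c' n < MM n + 3" using v \<open>c' p < MM p\<close> by (auto simp: c'_def vld_def)
  next
    fix n m assume h: "MM n \<le> c' n" "MM m \<le> c' m"
    have g: "MM k \<le> c k" if "MM k \<le> c' k" for k
    proof (cases "k = p")
      case True thus ?thesis using that \<open>c' p < MM p\<close> by simp
    next
      case False thus ?thesis using that by (simp add: c'_def)
    qed
    show "n = m" using v g[OF h(1)] g[OF h(2)] unfolding vld_def by blast
  qed
  have "c' \<noteq> c" by (auto simp: c'_def fun_eq_iff)
  hence ne: "enc c' \<noteq> x" using c_def by auto
  have "ag N c c'" using pN by (auto simp: ag_def c'_def)
  hence "dd x (enc c') < r" using N dd_le[of x "enc c'" N] c_def by simp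
  thus "\<exists>y\<in>XX. y \<noteq> x \<and> y \<in> M.mball x r" using x v' ne
    by (intro bexI[of _ "enc c'"]) auto
qed


lemma P_tdisc:
  assumes S: "S \<subseteq> XX" "connectedin M.mtopology S" and x: "x \<in> S" and y: "y \<in> S"
  shows "x = y"
proof (rule ccontr)
  assume "x \<noteq> y"
  have xX: "x \<in> XX" and yX: "y \<in> XX" using S x y by auto
  have "co x \<noteq> co y" using co_inj[OF xX yX] \<open>x \<noteq> y\<close> by simp
  hence "\<not> (\<forall>N. ag N (co x) (co y))" by (simp add: ag_all)
  then obtain N where N: "\<not> ag N (co x) (co y)" by blast
  define T where "T = {z \<in> XX. ag N (co z) (co x)}"
  have op: "openin M.mtopology T" unfolding M.openin_mtopology
  proof (intro conjI allI impI)
    show "T \<subseteq> XX" by (auto simp: T_def)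
  next
    fix z assume z: "z \<in> T"
    show "\<exists>r>0. M.mball z r \<subseteq> T"
    proof (intro exI conjI)
      show "(0::real) < (1/2)^N" by simp
      show "M.mball z ((1/2)^N) \<subseteq> T"
      proof
        fix w assume "w \<in> M.mball z ((1/2)^N)"
        hence "w \<in> XX" "dd z w < (1/2)^N" by auto
        hence "w \<in> XX" "ag (Suc N) (co z) (co w)" using ud_lt by (auto simp: dd_def)
        hence a: "ag N (co z) (co w)" using ag_mono[of "Suc N" "co z" "co w" N] by simp
        have b: "ag N (co z) (co x)" using z by (simp add: T_def)
        have "ag N (co w) (co x)" by (rule ag_trans[OF ag_sym[OF a] b])
        thus "w \<in> T" using \<open>w \<in> XX\<close> unfolding T_def by simp
      qed
    qed
  qed
  have cl: "closedin M.mtopology T" unfolding closedin_def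
  proof (intro conjI)
    show "T \<subseteq> topspace M.mtopology" by (auto simp: T_def)
    show "openin M.mtopology (topspace M.mtopology - T)" unfolding M.openin_mtopology
    proof (intro conjI allI impI)
      show "topspace M.mtopology - T \<subseteq> XX" by auto
    next
      fix z assume z: "z \<in> topspace M.mtopology - T"
      show "\<exists>r>0. M.mball z r \<subseteq> topspace M.mtopology - T"
      proof (intro exI conjI)
        show "(0::real) < (1/2)^N" by simp
        show "M.mball z ((1/2)^N) \<subseteq> topspace M.mtopology - T"
        proof
          fix w assume "w \<in> M.mball z ((1/2)^N)"
          hence "w \<in> XX" "dd z w < (1/2)^N" by auto
        hence "w \<in> XX" "ag (Suc N) (co z) (co w)" using ud_lt by (auto simp: dd_def)
          hence a: "ag N (co z) (co w)" "w \<in> XX" using ag_mono[of "Suc N" "co z" "co w" N] by auto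
          have "w \<notin> T"
          proof
            assume "w \<in> T"
            hence "ag N (co w) (co x)" by (simp add: T_def)
            hence "ag N (co z) (co x)" by (rule ag_trans[OF a(1)])
            hence "z \<in> T" using z unfolding T_def by simp
            thus False using z by simp
          qed
          thus "w \<in> topspace M.mtopology - T" using a by simp
        qed
      qed
    qed
  qed
  have "S \<subseteq> T \<or> disjnt S T" using connectedin_clopen_cases[OF S(2) cl op] .
  moreover have "x \<in> T" using xX by (simp add: T_def ag_def)
  moreover have "y \<notin> T"
  proof
    assume "y \<in> T" hence "ag N (co y) (co x)" by (simp add: T_def)
    thus False using N ag_sym[of N "co y" "co x"] by simp
  qed
  ultimately show False using x y unfolding disjnt_def by blast
qed


lemma P_tb: "M.mtotally_bounded XX"
  unfolding M.mtotally_bounded_def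
proof (intro allI impI)
  fix e :: real assume e: "0 < e"
  obtain N where N: "(1/2::real)^N < e" using small_pow[OF e] by blast
  define tr where "tr c = (\<lambda>n. if n < N then c n else 0)" for c :: "nat \<Rightarrow> nat"
  define K where "K = enc ` tr ` {c. vld c}"
  have trv: "vld c \<Longrightarrow> vld (tr c)" for c
    unfolding vld_def tr_def by auto
  have "tr ` {c. vld c} \<subseteq> (\<lambda>l n. if n < N then l ! n else 0) ` {l. set l \<subseteq> {..<MM N + 3} \<and> length l = N}"
  proof
    fix c assume "c \<in> tr ` {c. vld c}"
    then obtain c0 where c0: "vld c0" "c = tr c0" by auto
    have "\<And>n. n < N \<Longrightarrow> c0 n < MM N + 3"
    proof -
      fix n assume "n < N"
      hence "MM n \<le> MM N" unfolding MM_def by (simp add: power_increasing)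
      thus "c0 n < MM N + 3" using c0(1) unfolding vld_def by (metis add_le_mono1 order_less_le_trans)
    qed
    hence "set (map c0 [0..<N]) \<subseteq> {..<MM N + 3}" by auto
    moreover have "c = (\<lambda>n. if n < N then map c0 [0..<N] ! n else 0)" using c0 by (auto simp: tr_def)
    ultimately show "c \<in> (\<lambda>l n. if n < N then l ! n else 0) ` {l. set l \<subseteq> {..<MM N + 3} \<and> length l = N}"
      by (intro image_eqI[of _ _ "map c0 [0..<N]"]) auto
  qed
  hence "finite (tr ` {c. vld c})" by (rule finite_subset) (intro finite_imageI finite_lists_length_eq, simp)
  hence "finite K" by (simp add: K_def)
  moreover have "K \<subseteq> XX" using trv by (auto simp: K_def)
  moreover have "XX \<subseteq> (\<Union>x\<in>K. M.mball x e)"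
  proof
    fix x assume x: "x \<in> XX"
    have "ag N (co x) (tr (co x))" by (simp add: ag_def tr_def)
    hence "dd (enc (tr (co x))) x < e" using N dd_le[of x "enc (tr (co x))" N] M.commute by simp
    moreover have "enc (tr (co x)) \<in> K" using XX_co[OF x] by (auto simp: K_def)
    ultimately show "x \<in> (\<Union>x\<in>K. M.mball x e)" using x \<open>K \<subseteq> XX\<close> by auto
  qed
  ultimately show "\<exists>K. finite K \<and> K \<subseteq> XX \<and> XX \<subseteq> (\<Union>x\<in>K. M.mball x e)" by blast
qed




lemma P_complete: "M.mcomplete"
  unfolding M.mcomplete_def
proof (intro allI impI)
  fix \<sigma> assume C: "M.MCauchy \<sigma>"
  hence rng: "\<And>n. \<sigma> n \<in> XX" unfolding M.MCauchy_def by auto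
  have "\<forall>k. \<exists>N. \<forall>n n'. N \<le> n \<longrightarrow> N \<le> n' \<longrightarrow> dd (\<sigma> n) (\<sigma> n') < (1/2)^k"
    using C unfolding M.MCauchy_def by simp
  then obtain Nk where Nk: "\<And>k n n'. Nk k \<le> n \<Longrightarrow> Nk k \<le> n' \<Longrightarrow> dd (\<sigma> n) (\<sigma> n') < (1/2)^k"
    by metis
  define c where "c k = co (\<sigma> (Nk k)) k" for k
  have A: "\<And>k n. Nk k \<le> n \<Longrightarrow> co (\<sigma> n) k = c k"
  proof -
    fix k n assume "Nk k \<le> n"
    hence "ag (Suc k) (co (\<sigma> n)) (co (\<sigma> (Nk k)))" using Nk[of k n "Nk k"] dd_def ud_lt by auto
    thus "co (\<sigma> n) k = c k" by (simp add: ag_def c_def)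
  qed
  have vs: "\<And>n. vld (co (\<sigma> n))" using rng XX_co by blast
  have v: "vld c" unfolding vld_def
  proof (intro conjI allI impI)
    fix n show "c n < MM n + 3" using vs unfolding c_def vld_def by blast
  next
    fix a b assume h: "MM a \<le> c a" "MM b \<le> c b"
    have "co (\<sigma> (Nk a + Nk b)) a = c a" "co (\<sigma> (Nk a + Nk b)) b = c b" by (auto intro: A)
    thus "a = b" using h vs[of "Nk a + Nk b"] unfolding vld_def by metis
  qed
  have "limitin M.mtopology \<sigma> (enc c) sequentially"
    unfolding M.limitin_metric
  proof (intro conjI allI impI)
    show "enc c \<in> XX" using v by simp
  next
    fix e :: real assume e: "0 < e"
    obtain K where K: "(1/2::real)^K < e" using small_pow[OF e] by blast
    show "\<forall>\<^sub>F n in sequentially. \<sigma> n \<in> XX \<and> dd (\<sigma> n) (enc c) < e"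
      unfolding eventually_sequentially
    proof (intro exI allI impI)
      fix n assume n: "(\<Sum>k<K. Nk k) \<le> n"
      have "ag K (co (\<sigma> n)) c"
        unfolding ag_def
      proof (intro allI impI)
        fix k assume "k < K"
        hence "Nk k \<le> (\<Sum>k<K. Nk k)" by (intro member_le_sum) auto
        thus "co (\<sigma> n) k = c k" using n by (intro A) simp
      qed
      hence "dd (\<sigma> n) (enc c) \<le> (1/2)^K" using dd_le by simp
      thus "\<sigma> n \<in> XX \<and> dd (\<sigma> n) (enc c) < e" using K rng by simp
    qed
  qed
  thus "\<exists>x. limitin M.mtopology \<sigma> x sequentially" by blast
qed



lemma not3dvd: "\<not> (3::nat) dvd 2^j"
proof
  assume "3 dvd (2::nat)^j"
  moreover have "coprime (3::nat) (2^j)" by simp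
  ultimately show False by (metis coprime_absorb_left nat_dvd_1_iff_1 numeral_eq_one_iff semiring_norm(86))
qed

lemma co_ffpow: "x \<in> XX \<Longrightarrow> co ((ff ^^ i) x) = Gg (\<lambda>_. i) i (co x)"
  using ff_pow by simp

lemma ffpow_XX: "x \<in> XX \<Longrightarrow> (ff ^^ i) x \<in> XX"
  using ff_pow XX_co Gg_vld by simp

lemma Gg0: "vld c \<Longrightarrow> Gg (\<lambda>_. 0) 0 c = c"
  using Fs_pow[of c 0] by simp

lemma Gg_cc: "Gg (\<lambda>_. a) a (Gg (\<lambda>_. b) b c) = Gg (\<lambda>_. b + a) (b + a) c"
  by (simp add: Gg_comp)

lemma P_ps: "periodic_shadowing XX dd ff"
  unfolding periodic_shadowing_def
proof (intro allI impI)
  fix e :: real assume e: "0 < e"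
  obtain N where N: "(1/2::real)^N < e" using small_pow[OF e] by blast
  show "\<exists>\<delta>>0. \<forall>x m. delta_cycle XX dd ff \<delta> x m \<longrightarrow> (\<exists>p\<in>Per XX ff. \<forall>i\<le>m. dd (x i) ((ff ^^ i) p) \<le> e)"
  proof (intro exI conjI allI impI)
    show "(0::real) < (1/2)^N" by simp
    fix x m assume dc: "delta_cycle XX dd ff ((1/2)^N) x m"
    have xin: "\<And>i. i \<le> m \<Longrightarrow> x i \<in> XX" and st: "\<And>i. i < m \<Longrightarrow> dd (ff (x i)) (x (Suc i)) \<le> (1/2)^N"
      using dc unfolding delta_cycle_def by auto
    define c0 where "c0 = co (x 0)"
    have v0: "vld c0" using xin[of 0] XX_co c0_def by simp
    have cl: "i \<le> m \<Longrightarrow> ag N (Gg (\<lambda>_. i) i c0) (co (x i))" for i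
    proof (induction i)
      case 0 then show ?case using Gg0[OF v0] by (simp add: c0_def ag_def)
    next
      case (Suc i)
      hence a: "ag N (Gg (\<lambda>_. i) i c0) (co (x i))" by simp
      have "ag N (Fs (Gg (\<lambda>_. i) i c0)) (Fs (co (x i)))" unfolding Fs_def by (rule Gg_ag[OF a])
      moreover have "Fs (Gg (\<lambda>_. i) i c0) = Gg (\<lambda>_. Suc i) (Suc i) c0" by (simp add: Fs_def Gg_cc)
      moreover have "ag N (Fs (co (x i))) (co (x (Suc i)))"
        using st[of i] Suc.prems dd_le[of "ff (x i)" "x (Suc i)" N] by (simp add: ff_def)
      ultimately show ?case using ag_trans by metis
    qed
    obtain c' where c': "vld c'" "ag N c0 c'" "\<exists>j\<le>N. MM j \<le> c' j" using mkper[OF v0] by blast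
    have pP: "enc c' \<in> Per XX ff" using c' per_of_marked by blast
    have "\<forall>i\<le>m. dd (x i) ((ff ^^ i) (enc c')) \<le> e"
    proof (intro allI impI)
      fix i assume i: "i \<le> m"
      have "ag N (Gg (\<lambda>_. i) i c0) (Gg (\<lambda>_. i) i c')" by (rule Gg_ag[OF c'(2)])
      hence "ag N (co (x i)) (co ((ff ^^ i) (enc c')))"
        using cl[OF i] co_ffpow[of "enc c'" i] c'(1) ag_sym ag_trans by (metis XX_enc co_enc)
      hence "dd (x i) ((ff ^^ i) (enc c')) \<le> (1/2)^N" using dd_le by blast
      thus "dd (x i) ((ff ^^ i) (enc c')) \<le> e" using N by simp
    qed
    thus "\<exists>p\<in>Per XX ff. \<forall>i\<le>m. dd (x i) ((ff ^^ i) p) \<le> e" using pP by blast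
  qed
qed


lemma pow3: "x \<in> XX \<Longrightarrow> ((ff ^^ 3) ^^ i) x = enc (Gg (\<lambda>_. 3 * i) (3 * i) (co x))"
proof -
  assume pX: "x \<in> XX"
  have "((ff ^^ 3) ^^ i) x = (ff ^^ (3 * i)) x" by (simp only: funpow_mult)
  also have "\<dots> = enc (Gg (\<lambda>_. 3 * i) (3 * i) (co x))" by (rule ff_pow[OF pX])
  finally show ?thesis .
qed

lemma P_strict3: "strict_periodic_shadowing XX dd (ff ^^ 3)"
  unfolding strict_periodic_shadowing_def
proof (intro allI impI)
  fix e :: real assume e: "0 < e"
  obtain N where N: "(1/2::real)^N < e" using small_pow[OF e] by blast
  show "\<exists>\<delta>>0. \<forall>x m. delta_cycle XX dd (ff ^^ 3) \<delta> x m \<longrightarrow>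
     (\<exists>p\<in>Per XX (ff ^^ 3). ((ff ^^ 3) ^^ m) p = p \<and> (\<forall>i\<le>m. dd (x i) (((ff ^^ 3) ^^ i) p) \<le> e))"
  proof (intro exI conjI allI impI)
    show "(0::real) < (1/2)^N" by simp
    fix x m assume dc: "delta_cycle XX dd (ff ^^ 3) ((1/2)^N) x m"
    have xin: "\<And>i. i \<le> m \<Longrightarrow> x i \<in> XX" and st: "\<And>i. i < m \<Longrightarrow> dd ((ff ^^ 3) (x i)) (x (Suc i)) \<le> (1/2)^N"
      and m1: "1 \<le> m" and x0m: "x 0 = x m"
      using dc unfolding delta_cycle_def by auto
    define c0 where "c0 = co (x 0)"
    have v0: "vld c0" using xin[of 0] XX_co c0_def by simp
    have cl: "i \<le> m \<Longrightarrow> ag N (Gg (\<lambda>_. 3 * i) (3 * i) c0) (co (x i))" for i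
    proof (induction i)
      case 0 then show ?case using Gg0[OF v0] by (simp add: c0_def ag_def)
    next
      case (Suc i)
      hence a: "ag N (Gg (\<lambda>_. 3 * i) (3 * i) c0) (co (x i))" by simp
      have "ag N (Gg (\<lambda>_. 3) 3 (Gg (\<lambda>_. 3 * i) (3 * i) c0)) (Gg (\<lambda>_. 3) 3 (co (x i)))" by (rule Gg_ag[OF a])
      hence A: "ag N (Gg (\<lambda>_. 3) 3 (Gg (\<lambda>_. 3 * i) (3 * i) c0)) (Gg (\<lambda>_. 3) 3 (co (x i)))" .
      have "3 * i + 3 = 3 * Suc i" by simp
      hence B: "Gg (\<lambda>_. 3) 3 (Gg (\<lambda>_. 3 * i) (3 * i) c0) = Gg (\<lambda>_. 3 * Suc i) (3 * Suc i) c0"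
        by (simp only: Gg_cc)
      have xi: "x i \<in> XX" using xin Suc.prems by simp
      have "dd ((ff ^^ 3) (x i)) (x (Suc i)) \<le> (1/2)^N" using st[of i] Suc.prems by simp
      hence C: "ag N (Gg (\<lambda>_. 3) 3 (co (x i))) (co (x (Suc i)))"
        using dd_le[of "(ff ^^ 3) (x i)" "x (Suc i)" N] co_ffpow[OF xi, of 3] by simp
      show ?case using ag_trans[OF A C] B by simp
    qed
    obtain c' j where c': "vld c'" "ag N c0 c'" and j: "j \<le> N" "MM j \<le> c' j" using mkper[OF v0] by blast
    have clm0: "ag N (Gg (\<lambda>_. 3 * m) (3 * m) c0) (co (x m))" by (rule cl) (rule order_refl)
    have eqm: "co (x m) = c0" by (simp only: c0_def x0m)
    have clm: "ag N (Gg (\<lambda>_. 3 * m) (3 * m) c0) c0" using clm0 unfolding eqm .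
    have fix': "Gg (\<lambda>_. 3 * m) (3 * m) c' = c'"
    proof (rule marked_periodic[OF c'(1) j(2)])
      fix n assume n: "n < j"
      have nN: "n < N" using n j by simp
      have uniq: "\<And>k. k \<noteq> j \<Longrightarrow> c' k < MM k" 
      proof -
        fix k assume "k \<noteq> j"
        show "c' k < MM k"
        proof (rule ccontr)
          assume "\<not> c' k < MM k"
          hence "MM k \<le> c' k" by simp
          hence "k = j" using c'(1) j(2) unfolding vld_def by blast
          thus False using \<open>k \<noteq> j\<close> by simp
        qed
      qed
      have e1: "\<And>k. k < N \<Longrightarrow> c0 k = c' k" using c'(2) by (simp add: ag_def)
      have nk: "\<not> (\<exists>k<n. MM k \<le> c0 k)"
      proof
        assume "\<exists>k<n. MM k \<le> c0 k"
        then obtain k where k: "k < n" "MM k \<le> c0 k" by blast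
        have "k < N" "k \<noteq> j" using k n nN by auto
        hence "c0 k < MM k" using uniq e1 by simp
        thus False using k by simp
      qed
      have nn: "\<not> MM n \<le> c0 n"
      proof -
        have "n \<noteq> j" using n by simp
        hence "c0 n < MM n" using uniq e1 nN by simp
        thus ?thesis by simp
      qed
      have "Gg (\<lambda>_. 3 * m) (3 * m) c0 n = (c0 n + 3 * m) mod MM n"
        by (simp only: Gg_def if_not_P[OF nk] if_not_P[OF nn])
      moreover have "Gg (\<lambda>_. 3 * m) (3 * m) c0 n = c0 n" using clm nN by (simp add: ag_def)
      ultimately have "(c0 n + 3 * m) mod MM n = c0 n" by simp
      moreover have "c0 n < MM n" using \<open>\<not> MM n \<le> c0 n\<close> by simp
      ultimately show "MM n dvd 3 * m" using mod_dvd_lemma by blast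
    qed simp
    define p where "p = enc c'"
    have pX: "p \<in> XX" unfolding p_def using c'(1) by simp
    have pm: "((ff ^^ 3) ^^ m) p = p"
      using pow3[OF pX, of m] fix' by (simp add: p_def)
    have "\<exists>n>0. ((ff ^^ 3) ^^ n) p = p" using pm m1 by (intro exI[of _ m]) simp
    hence pP: "p \<in> Per XX (ff ^^ 3)" unfolding Per_def using pX by simp
    have "\<forall>i\<le>m. dd (x i) (((ff ^^ 3) ^^ i) p) \<le> e"
    proof (intro allI impI)
      fix i assume i: "i \<le> m"
      have A: "ag N (Gg (\<lambda>_. 3 * i) (3 * i) c0) (Gg (\<lambda>_. 3 * i) (3 * i) c')" by (rule Gg_ag[OF c'(2)])
      have B: "co (((ff ^^ 3) ^^ i) p) = Gg (\<lambda>_. 3 * i) (3 * i) c'"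
        using pow3[OF pX, of i] by (simp add: p_def)
      have "ag N (co (x i)) (co (((ff ^^ 3) ^^ i) p))"
        using ag_trans[OF ag_sym[OF cl[OF i]] A] B by simp
      hence "dd (x i) (((ff ^^ 3) ^^ i) p) \<le> (1/2)^N" using dd_le by blast
      thus "dd (x i) (((ff ^^ 3) ^^ i) p) \<le> e" using N by simp
    qed
    thus "\<exists>p\<in>Per XX (ff ^^ 3). ((ff ^^ 3) ^^ m) p = p \<and> (\<forall>i\<le>m. dd (x i) (((ff ^^ 3) ^^ i) p) \<le> e)"
      using pP pm by blast
  qed
qed

lemma no_fix: "vld c \<Longrightarrow> Gg (\<lambda>_. 2^j) (2^j) c \<noteq> c"
proof
  assume v: "vld c" and eq: "Gg (\<lambda>_. 2^j) (2^j) c = c"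
  show False
  proof (cases "\<exists>k. MM k \<le> c k")
    case True
    then obtain k where k: "MM k \<le> c k" by blast
    have nk: "\<not> (\<exists>k'<k. MM k' \<le> c k')"
    proof
      assume "\<exists>k'<k. MM k' \<le> c k'"
      then obtain k' where "k' < k" "MM k' \<le> c k'" by blast
      hence "k' = k" using v k unfolding vld_def by blast
      thus False using \<open>k' < k\<close> by simp
    qed
    have Gk: "Gg (\<lambda>_. 2^j) (2^j) c k = MM k + (c k - MM k + 2^j) mod 3"
      by (simp only: Gg_def if_not_P[OF nk] if_P[OF k])
    have "MM k + (c k - MM k + 2^j) mod 3 = c k" using Gk unfolding fun_cong[OF eq, of k] by (rule sym)
    hence "(c k - MM k + 2^j) mod 3 = c k - MM k" by (metis add_diff_cancel_left')
    moreover have "c k < MM k + 3" using v unfolding vld_def by blast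
    hence "c k - MM k < 3" by linarith
    ultimately have "3 dvd (2::nat)^j" using mod_dvd_lemma by blast
    thus False using not3dvd by blast
  next
    case False
    hence "Gg (\<lambda>_. 2^j) (2^j) c j = (c j + 2^j) mod MM j" by (simp add: Gg_def)
    hence "(c j + 2^j) mod MM j = c j" using eq by metis
    moreover have "\<not> MM j \<le> c j" using False by blast
    hence "c j < MM j" by simp
    ultimately have "MM j dvd 2^j" using mod_dvd_lemma by blast
    hence "MM j \<le> 2^j" by (rule dvd_imp_le) simp
    thus False by (simp add: MM_def)
  qed
qed

lemma P_notstrict: "\<not> strict_periodic_shadowing XX dd ff"
proof
  assume "strict_periodic_shadowing XX dd ff"
  then obtain \<delta> where d: "\<delta> > 0" and H: "\<And>x m. delta_cycle XX dd ff \<delta> x m \<Longrightarrow>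
        (\<exists>p\<in>Per XX ff. (ff ^^ m) p = p \<and> (\<forall>i\<le>m. dd (x i) ((ff ^^ i) p) \<le> 1))"
    unfolding strict_periodic_shadowing_def by (elim allE[of _ 1]) auto
  obtain j where j: "(1/2::real)^j < \<delta>" using small_pow[OF d] by blast
  define c0 where "c0 = (\<lambda>n. if n = j then MM j else 0)"
  have v0: "vld c0" unfolding vld_def c0_def by auto
  define x0 where "x0 = enc c0"
  have x0X: "x0 \<in> XX" using v0 x0_def by simp
  define m :: nat where "m = 2^j"
  define xs where "xs i = (if i < m then (ff ^^ i) x0 else x0)" for i
  have m1: "1 \<le> m" by (simp add: m_def)
  have agm: "ag j (Gg (\<lambda>_. m) m c0) c0"
    unfolding ag_def
  proof (intro allI impI)
    fix n assume n: "n < j"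
    have "MM n dvd m" unfolding MM_def m_def using n by (intro le_imp_power_dvd) simp
    thus "Gg (\<lambda>_. m) m c0 n = c0 n" using n by (auto simp: Gg_def c0_def)
  qed
  have "delta_cycle XX dd ff \<delta> xs m"
    unfolding delta_cycle_def
  proof (intro conjI allI impI)
    show "1 \<le> m" by (rule m1)
  next
    fix i show "xs i \<in> XX" using ffpow_XX[OF x0X] x0X by (simp add: xs_def)
  next
    fix i assume i: "i < m"
    show "dd (ff (xs i)) (xs (Suc i)) \<le> \<delta>"
    proof (cases "Suc i < m")
      case True
      then show ?thesis using i d by (simp add: xs_def dd_def ud_def less_imp_le)
    next
      case False
      hence "Suc i = m" using i by simp
      hence "ff (xs i) = (ff ^^ m) x0" using i by (auto simp: xs_def)
      moreover have "xs (Suc i) = x0" using \<open>Suc i = m\<close> by (simp add: xs_def)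
      ultimately have "dd (ff (xs i)) (xs (Suc i)) \<le> (1/2)^j"
        using dd_le co_ffpow[OF x0X, of m] agm by (simp add: x0_def)
      then show ?thesis using j by simp
    qed
  next
    show "xs 0 = xs m" using m1 by (simp add: xs_def)
  qed
  then obtain p where p: "p \<in> Per XX ff" "(ff ^^ m) p = p" using H by blast
  have pX: "p \<in> XX" using p(1) by (simp add: Per_def)
  have "Gg (\<lambda>_. m) m (co p) = co p" using co_ffpow[OF pX, of m] p(2) by simp
  thus False using no_fix[OF XX_co(1)[OF pX], of j] by (simp add: m_def)
qed


lemma P_cantor: "cantor_space XX dd"
  unfolding cantor_space_def
proof (intro conjI)
  show "Metric_space XX dd" by (rule M.Metric_space_axioms)
  show "XX \<noteq> {}" by (rule XX_ne)
  show "compact_space M.mtopology"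
    using M.compact_space_eq_mcomplete_mtotally_bounded P_complete P_tb by blast
  show "\<forall>x\<in>XX. x \<in> M.mtopology derived_set_of XX" using P_perfect by blast
  show "\<forall>S. S \<subseteq> XX \<and> connectedin M.mtopology S \<longrightarrow> (\<forall>x\<in>S. \<forall>y\<in>S. x = y)"
    using P_tdisc by blast
qed

theorem mainTheorem13:
  shows "\<exists>(X :: real set) (d :: real \<Rightarrow> real \<Rightarrow> real) (f :: real \<Rightarrow> real).
     cantor_space X d \<and>
     homeomorphic_map (Metric_space.mtopology X d) (Metric_space.mtopology X d) f \<and>
     (Metric_space.mtopology X d) closure_of (Per X f) = X \<and>
     equicontinuous_homeo X d f \<and>
     periodic_shadowing X d f \<and>
     \<not> strict_periodic_shadowing X d f \<and>
     strict_periodic_shadowing X d (f ^^ 3)"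
  using P_cantor P_homeo P_dense P_equi P_ps P_notstrict P_strict3 by blast

end
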